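(* Let $H=F+G$ where $F$ satisfies the Lipschitz condition in (A1) and \[ G(\theta,x)=\sum_{j=1}^N\dot g_j(\theta,x)\,\mathbb{1}_{\bigcap_{i=1}^m\{x^{(i)}\in I_{i,j}(\theta)\}} \] is lower semi-continuous, with $N\ge1$, where each $\dot g_j:\mathbb{R}^d\times\mathbb{R}^m\to\mathbb{R}^d$ satisfies, for some $L_3,L_4,K_2>0$ and all $\theta,\theta',x,x'$, $|\dot g_j(\theta,x)-\dot g_j(\theta',x')|\le(1+|x|+|x'|)^\rho(L_3|\theta-\theta'|+L_4|x-x'|)$ and $|\dot g_j(\theta,x)|\le K_2$, and each interval $I_{i,j}(\theta)$ is of one of the forms $(-\infty,\bar g^{(i)}_j(\theta))$, $(\bar g^{(i)}_j(\theta),\infty)$, $(\tilde g^{(i)}_j(\theta),\hat g^{(i)}_j(\theta))$ with $\bar g^{(i)}_j,\tilde g^{(i)}_j,\hat g^{(i)}_j:\mathbb{R}^d\to\mathbb{R}$ Lipschitz continuous. Suppose $\mathbb{E}|X_0|^{\rho}<\infty$ and that for each $i=1,\dots,m$ the coordinate $X_0^{(i)}$ has a continuous and bounded density. Then there is $L>0$ such that $\mathbb{E}|H(\theta,X_0)-H(\theta',X_0)|\le L|\theta-\theta'|$ for all $\theta,\theta'\in\mathbb{R}^d$.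
   Context: $X_0$ is an $\mathbb{R}^m$-valued random variable with coordinates $X_0^{(1)},\dots,X_0^{(m)}$; $x^{(i)}$ denotes the $i$-th coordinate of $x\in\mathbb{R}^m$. The Lipschitz condition in (A1): there are $L_1,L_2>0$, $\rho\ge0$ with $|F(\theta,x)-F(\theta',x')|\le(1+|x|+|x'|)^\rho(L_1|\theta-\theta'|+L_2|x-x'|)$ for all $\theta,\theta'\in\mathbb{R}^d$, $x,x'\in\mathbb{R}^m$. *)

theory Defs
  imports "HOL-Analysis.Analysis" "HOL-Probability.Probability"
begin

definition lsc_real :: "('a::topological_space \<Rightarrow> real) \<Rightarrow> bool" where
  "lsc_real f \<longleftrightarrow> (\<forall>z. \<forall>t. t < f z \<longrightarrow> (\<forall>\<^sub>F y in nhds z. t < f y))"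

definition lsc_vec :: "('a::topological_space \<Rightarrow> real^'n) \<Rightarrow> bool" where
  "lsc_vec f \<longleftrightarrow> (\<forall>k. lsc_real (\<lambda>z. f z $ k))"

definition admissible_interval :: "(real^'d \<Rightarrow> real set) \<Rightarrow> bool" where
  "admissible_interval I \<longleftrightarrow>
     (\<exists>g C. C-lipschitz_on UNIV g \<and> I = (\<lambda>\<theta>. {..< g \<theta>})) \<or>
     (\<exists>g C. C-lipschitz_on UNIV g \<and> I = (\<lambda>\<theta>. {g \<theta> <..})) \<or>
     (\<exists>g h C D. C-lipschitz_on UNIV g \<and> D-lipschitz_on UNIV h \<and> I = (\<lambda>\<theta>. {g \<theta> <..< h \<theta>}))"

end

theory Submission
  imports Defs
begin

lemma vec_nth_meas[measurable]:
  fixes X :: "'w \<Rightarrow> real^'m"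
  assumes "X \<in> borel_measurable M"
  shows "(\<lambda>w. X w $ i) \<in> borel_measurable M"
proof -
  have "(\<lambda>v::real^'m. v $ i) \<in> borel_measurable borel"
    by (intro borel_measurable_continuous_onI continuous_on_component continuous_on_id)
  then show ?thesis using measurable_compose[OF assms] by blast
qed

lemma prob_Icc:
  fixes f :: "real \<Rightarrow> real"
  assumes P: "prob_space M" and d: "distributed M lborel Y (\<lambda>t. ennreal (f t))"
    and fB: "\<And>t. f t \<le> B" and ab: "a \<le> b" and B: "0 \<le> B"
  shows "emeasure M (Y -` {a..b} \<inter> space M) \<le> ennreal (B * (b - a))"
proof -
  have "emeasure M (Y -` {a..b} \<inter> space M) = (\<integral>\<^sup>+x. ennreal (f x) * indicator {a..b} x \<partial>lborel)"
    by (rule distributed_emeasure[OF d]) auto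
  also have "\<dots> \<le> (\<integral>\<^sup>+x. ennreal B * indicator {a..b} x \<partial>lborel)"
    by (intro nn_integral_mono) (auto simp: fB indicator_def intro: ennreal_leI)
  also have "\<dots> = ennreal B * emeasure lborel {a..b}"
    by (simp add: nn_integral_cmult_indicator)
  also have "\<dots> = ennreal (B * (b - a))" using ab B by (simp add: ennreal_mult)
  finally show ?thesis .
qed

lemma lip_absdiff:
  assumes "C-lipschitz_on UNIV g"
  shows "\<bar>g x - g y\<bar> \<le> C * norm (x - y)" "0 \<le> C"
  using assms unfolding lipschitz_on_def by (auto simp: dist_norm dist_real_def)

lemma interval_sd:
  fixes I :: "real^'d \<Rightarrow> real set"
  assumes "admissible_interval I"
  shows "\<exists>C\<ge>0. \<forall>\<theta> \<theta>'. \<exists>a b c d. a \<le> b \<and> c \<le> d \<and> (b - a) + (d - c) \<le> C * norm (\<theta> - \<theta>') \<and>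
           (\<forall>t. (t \<in> I \<theta>) \<noteq> (t \<in> I \<theta>') \<longrightarrow> t \<in> {a..b} \<or> t \<in> {c..d})"
  using assms unfolding admissible_interval_def
proof (elim disjE exE conjE)
  fix g C assume L: "C-lipschitz_on UNIV g" and I: "I = (\<lambda>\<theta>. {..< g \<theta>})"
  show ?thesis
  proof (rule exI[of _ C], intro conjI allI)
    show "0 \<le> C" using lip_absdiff[OF L] by auto
        fix \<theta> \<theta>' :: "real^'d"
    show "\<exists>a b c d. a \<le> b \<and> c \<le> d \<and> (b - a) + (d - c) \<le> C * norm (\<theta> - \<theta>') \<and>
           (\<forall>t. (t \<in> I \<theta>) \<noteq> (t \<in> I \<theta>') \<longrightarrow> t \<in> {a..b} \<or> t \<in> {c..d})"
      using lip_absdiff(1)[OF L, of \<theta> \<theta>']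
      by (intro exI[of _ "min (g \<theta>) (g \<theta>')"] exI[of _ "max (g \<theta>) (g \<theta>')"] exI[of _ 0] exI[of _ 0])
         (auto simp: I)
  qed
next
  fix g C assume L: "C-lipschitz_on UNIV g" and I: "I = (\<lambda>\<theta>. {g \<theta> <..})"
  show ?thesis
  proof (rule exI[of _ C], intro conjI allI)
    show "0 \<le> C" using lip_absdiff[OF L] by auto
    fix \<theta> \<theta>' :: "real^'d"
    show "\<exists>a b c d. a \<le> b \<and> c \<le> d \<and> (b - a) + (d - c) \<le> C * norm (\<theta> - \<theta>') \<and>
           (\<forall>t. (t \<in> I \<theta>) \<noteq> (t \<in> I \<theta>') \<longrightarrow> t \<in> {a..b} \<or> t \<in> {c..d})"
      using lip_absdiff(1)[OF L, of \<theta> \<theta>']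
      by (intro exI[of _ "min (g \<theta>) (g \<theta>')"] exI[of _ "max (g \<theta>) (g \<theta>')"] exI[of _ 0] exI[of _ 0])
         (auto simp: I)
  qed
next
  fix g h C D assume L: "C-lipschitz_on UNIV g" and L': "D-lipschitz_on UNIV h"
    and I: "I = (\<lambda>\<theta>. {g \<theta> <..< h \<theta>})"
  show ?thesis
  proof (rule exI[of _ "C + D"], intro conjI allI)
    show "0 \<le> C + D" using lip_absdiff[OF L] lip_absdiff[OF L'] by auto
    fix \<theta> \<theta>' :: "real^'d"
    show "\<exists>a b c d. a \<le> b \<and> c \<le> d \<and> (b - a) + (d - c) \<le> (C + D) * norm (\<theta> - \<theta>') \<and>
           (\<forall>t. (t \<in> I \<theta>) \<noteq> (t \<in> I \<theta>') \<longrightarrow> t \<in> {a..b} \<or> t \<in> {c..d})"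
      using lip_absdiff(1)[OF L, of \<theta> \<theta>'] lip_absdiff(1)[OF L', of \<theta> \<theta>']
      by (intro exI[of _ "min (g \<theta>) (g \<theta>')"] exI[of _ "max (g \<theta>) (g \<theta>')"]
            exI[of _ "min (h \<theta>) (h \<theta>')"] exI[of _ "max (h \<theta>) (h \<theta>')"])
         (auto simp: I distrib_right)
  qed
qed

lemma interval_open:
  assumes "admissible_interval I"
  shows "open (I \<theta>)"
  using assms unfolding admissible_interval_def by auto

lemma sd_sets:
  assumes Y: "Y \<in> borel_measurable M" and I: "admissible_interval I"
  shows "{\<omega>\<in>space M. (Y \<omega> \<in> I \<theta>) \<noteq> (Y \<omega> \<in> I \<theta>')} \<in> sets M"
proof -
  have o1: "I \<theta> \<in> sets borel" "I \<theta>' \<in> sets borel" using interval_open[OF I] by auto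
  have "{\<omega>\<in>space M. Y \<omega> \<in> I \<theta>} \<in> sets M" "{\<omega>\<in>space M. Y \<omega> \<in> I \<theta>'} \<in> sets M"
    using measurable_sets[OF Y o1(1)] measurable_sets[OF Y o1(2)] by (auto simp: vimage_def Int_def conj_commute)
  then have "{\<omega>\<in>space M. Y \<omega> \<in> I \<theta>} - {\<omega>\<in>space M. Y \<omega> \<in> I \<theta>'} \<union>
             ({\<omega>\<in>space M. Y \<omega> \<in> I \<theta>'} - {\<omega>\<in>space M. Y \<omega> \<in> I \<theta>}) \<in> sets M" by auto
  also have "{\<omega>\<in>space M. Y \<omega> \<in> I \<theta>} - {\<omega>\<in>space M. Y \<omega> \<in> I \<theta>'} \<union>
             ({\<omega>\<in>space M. Y \<omega> \<in> I \<theta>'} - {\<omega>\<in>space M. Y \<omega> \<in> I \<theta>}) =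
             {\<omega>\<in>space M. (Y \<omega> \<in> I \<theta>) \<noteq> (Y \<omega> \<in> I \<theta>')}" by auto
  finally show ?thesis .
qed

lemma sd_measure:
  fixes f :: "real \<Rightarrow> real" and I :: "real^'d \<Rightarrow> real set"
  assumes P: "prob_space M" and Y: "Y \<in> borel_measurable M" and I: "admissible_interval I"
    and f0: "\<And>t. f t \<ge> 0" and fb: "bounded (range f)"
    and d: "distributed M lborel Y (\<lambda>t. ennreal (f t))"
  shows "\<exists>C\<ge>0. \<forall>\<theta> \<theta>'. measure M {\<omega>\<in>space M. (Y \<omega> \<in> I \<theta>) \<noteq> (Y \<omega> \<in> I \<theta>')} \<le> C * norm (\<theta> - \<theta>')"
proof -
  interpret prob_space M by (rule P)
  obtain B where B: "\<And>t. \<bar>f t\<bar> \<le> B" using fb unfolding bounded_iff by auto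
  have B0: "0 \<le> B" using B[of 0] by auto
  have fB: "\<And>t. f t \<le> B" using B by (metis abs_ge_self order_trans)
  obtain C where C0: "C \<ge> 0" and C: "\<And>\<theta> \<theta>'. \<exists>a b c d. a \<le> b \<and> c \<le> d \<and> (b - a) + (d - c) \<le> C * norm (\<theta> - \<theta>') \<and>
           (\<forall>t. (t \<in> I \<theta>) \<noteq> (t \<in> I \<theta>') \<longrightarrow> t \<in> {a..b} \<or> t \<in> {c..d})"
    using interval_sd[OF I] by blast
  show ?thesis
  proof (rule exI[of _ "B * C"], intro conjI allI)
    show "0 \<le> B * C" using B0 C0 by simp
    fix \<theta> \<theta>' :: "real^'d"
    obtain a b c d where ab: "a \<le> b" and cd: "c \<le> d" and len: "(b - a) + (d - c) \<le> C * norm (\<theta> - \<theta>')"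
      and sub: "\<And>t. (t \<in> I \<theta>) \<noteq> (t \<in> I \<theta>') \<Longrightarrow> t \<in> {a..b} \<or> t \<in> {c..d}"
      using C[of \<theta> \<theta>'] by blast
    have s1: "Y -` {a..b} \<inter> space M \<in> sets M" "Y -` {c..d} \<inter> space M \<in> sets M"
      using measurable_sets[OF Y] by auto
    have "emeasure M {\<omega>\<in>space M. (Y \<omega> \<in> I \<theta>) \<noteq> (Y \<omega> \<in> I \<theta>')}
        \<le> emeasure M ((Y -` {a..b} \<inter> space M) \<union> (Y -` {c..d} \<inter> space M))"
    proof (rule emeasure_mono)
      show "{\<omega>\<in>space M. (Y \<omega> \<in> I \<theta>) \<noteq> (Y \<omega> \<in> I \<theta>')} \<subseteq> (Y -` {a..b} \<inter> space M) \<union> (Y -` {c..d} \<inter> space M)"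
        using sub by blast
    qed (use s1 in auto)
    also have "\<dots> \<le> emeasure M (Y -` {a..b} \<inter> space M) + emeasure M (Y -` {c..d} \<inter> space M)"
      using s1 by (intro emeasure_subadditive) auto
    also have "\<dots> \<le> ennreal (B * (b - a)) + ennreal (B * (d - c))"
      by (intro add_mono prob_Icc[OF P d fB] ab cd B0)
    also have "\<dots> = ennreal (B * ((b - a) + (d - c)))"
      using ab cd B0 by (simp add: ennreal_plus[symmetric] distrib_left del: ennreal_plus)
    also have "\<dots> \<le> ennreal (B * C * norm (\<theta> - \<theta>'))"
      using len B0 by (intro ennreal_leI) (simp add: mult.assoc mult_left_mono)
    finally have "ennreal (measure M {\<omega>\<in>space M. (Y \<omega> \<in> I \<theta>) \<noteq> (Y \<omega> \<in> I \<theta>')}) \<le> ennreal (B * C * norm (\<theta> - \<theta>'))"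
      by (simp add: emeasure_eq_measure)
    then show "measure M {\<omega>\<in>space M. (Y \<omega> \<in> I \<theta>) \<noteq> (Y \<omega> \<in> I \<theta>')} \<le> B * C * norm (\<theta> - \<theta>')"
      using B0 C0 by (simp add: ennreal_le_iff)
  qed
qed

lemma powr_bound:
  fixes t \<rho> :: real assumes "0 \<le> t" "0 \<le> \<rho>"
  shows "(1 + t + t) powr \<rho> \<le> 3 powr \<rho> * (1 + t powr \<rho>)"
proof -
  have "(1 + t + t) powr \<rho> \<le> (3 * max 1 t) powr \<rho>"
    using assms by (intro powr_mono2) auto
  also have "\<dots> = 3 powr \<rho> * max 1 t powr \<rho>" using assms by (simp add: powr_mult)
  also have "max 1 t powr \<rho> \<le> 1 + t powr \<rho>"
  proof (cases "t \<le> 1")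
    case True then show ?thesis by (simp add: max_def)
  next
    case False then show ?thesis by (simp add: max_def)
  qed
  then have "3 powr \<rho> * max 1 t powr \<rho> \<le> 3 powr \<rho> * (1 + t powr \<rho>)"
    by (intro mult_left_mono) auto
  finally show ?thesis .
qed

lemma term_bound:
  fixes gt gt' :: "real^'d" and P L3 nd K2 S :: real
  assumes "A \<Longrightarrow> A' \<Longrightarrow> norm (gt - gt') \<le> P * L3 * nd"
    and "norm gt \<le> K2" "norm gt' \<le> K2" "0 \<le> P * L3 * nd" "A \<noteq> A' \<Longrightarrow> 1 \<le> S" "0 \<le> S" "0 \<le> K2"
  shows "norm ((if A then gt else 0) - (if A' then gt' else 0)) \<le> P * L3 * nd + K2 * S"
proof -
  have "0 \<le> K2 * S" using assms by simp
  moreover have "A \<noteq> A' \<Longrightarrow> K2 \<le> K2 * S" using assms mult_left_mono[of 1 S K2] by simp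
  ultimately show ?thesis using assms by (cases A; cases A'; simp; linarith)
qed

theorem mainTheorem7:
  fixes F :: "real^'d \<Rightarrow> real^'m \<Rightarrow> real^'d"
    and gdot :: "nat \<Rightarrow> real^'d \<Rightarrow> real^'m \<Rightarrow> real^'d"
    and I :: "'m \<Rightarrow> nat \<Rightarrow> real^'d \<Rightarrow> real set"
    and G H :: "real^'d \<Rightarrow> real^'m \<Rightarrow> real^'d"
    and N :: nat
    and L1 L2 L3 L4 K2 \<rho> :: real
    and M :: "'w measure" and X0 :: "'w \<Rightarrow> real^'m"
  assumes rho: "\<rho> \<ge> 0" and L1: "L1 > 0" and L2: "L2 > 0"
    and F_lip: "\<And>\<theta> \<theta>' x x'. norm (F \<theta> x - F \<theta>' x')
        \<le> (1 + norm x + norm x') powr \<rho> * (L1 * norm (\<theta> - \<theta>') + L2 * norm (x - x'))"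
    and N: "N \<ge> 1"
    and L3: "L3 > 0" and L4: "L4 > 0" and K2: "K2 > 0"
    and g_lip: "\<And>j \<theta> \<theta>' x x'. j \<in> {1..N} \<Longrightarrow> norm (gdot j \<theta> x - gdot j \<theta>' x')
        \<le> (1 + norm x + norm x') powr \<rho> * (L3 * norm (\<theta> - \<theta>') + L4 * norm (x - x'))"
    and g_bdd: "\<And>j \<theta> x. j \<in> {1..N} \<Longrightarrow> norm (gdot j \<theta> x) \<le> K2"
    and I_adm: "\<And>i j. j \<in> {1..N} \<Longrightarrow> admissible_interval (I i j)"
    and G_def: "\<And>\<theta> x. G \<theta> x = (\<Sum>j\<in>{1..N}. (if (\<forall>i. x $ i \<in> I i j \<theta>) then gdot j \<theta> x else 0))"
    and G_lsc: "lsc_vec (\<lambda>(\<theta>, x). G \<theta> x)"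
    and H_def: "\<And>\<theta> x. H \<theta> x = F \<theta> x + G \<theta> x"
    and M: "prob_space M"
    and X0_meas: "X0 \<in> borel_measurable M"
    and moment: "integrable M (\<lambda>\<omega>. norm (X0 \<omega>) powr \<rho>)"
    and density: "\<And>i. \<exists>f :: real \<Rightarrow> real. (\<forall>t. f t \<ge> 0) \<and> continuous_on UNIV f \<and>
        bounded (range f) \<and> distributed M lborel (\<lambda>\<omega>. X0 \<omega> $ i) (\<lambda>t. ennreal (f t))"
  shows "\<exists>L > 0. \<forall>\<theta> \<theta>'. (\<integral>\<^sup>+ \<omega>. ennreal (norm (H \<theta> (X0 \<omega>) - H \<theta>' (X0 \<omega>))) \<partial>M)
            \<le> ennreal (L * norm (\<theta> - \<theta>'))"
proof -
  interpret prob_space M by (rule M)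
  define P where "P = (\<lambda>x::real^'m. (1 + norm x + norm x) powr \<rho>)"
  have P0: "\<And>x. 0 \<le> P x" by (simp add: P_def)
  define D where "D = (\<lambda>i j \<theta> \<theta>'. {\<omega>\<in>space M. (X0 \<omega> $ i \<in> I i j \<theta>) \<noteq> (X0 \<omega> $ i \<in> I i j \<theta>')})"
  have Xi: "\<And>i. (\<lambda>\<omega>. X0 \<omega> $ i) \<in> borel_measurable M" using X0_meas by (rule vec_nth_meas)
  have Dsets: "\<And>i j \<theta> \<theta>'. j \<in> {1..N} \<Longrightarrow> D i j \<theta> \<theta>' \<in> sets M"
    unfolding D_def by (rule sd_sets[OF Xi I_adm])
  have exC: "\<And>i j. j \<in> {1..N} \<Longrightarrow> \<exists>C\<ge>0. \<forall>\<theta> \<theta>'. measure M (D i j \<theta> \<theta>') \<le> C * norm (\<theta> - \<theta>')"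
  proof -
    fix i j assume j: "j \<in> {1..N}"
    obtain f :: "real \<Rightarrow> real" where f: "\<forall>t. f t \<ge> 0" "bounded (range f)"
      "distributed M lborel (\<lambda>\<omega>. X0 \<omega> $ i) (\<lambda>t. ennreal (f t))"
      using density[of i] by blast
    show "\<exists>C\<ge>0. \<forall>\<theta> \<theta>'. measure M (D i j \<theta> \<theta>') \<le> C * norm (\<theta> - \<theta>')"
      unfolding D_def by (rule sd_measure[OF M Xi I_adm[OF j]]) (use f in auto)
  qed
  define Cf where "Cf = (\<lambda>i j. SOME C. C \<ge> 0 \<and> (\<forall>\<theta> \<theta>'. measure M (D i j \<theta> \<theta>') \<le> C * norm (\<theta> - \<theta>')))"
  have Cf: "\<And>i j. j \<in> {1..N} \<Longrightarrow> Cf i j \<ge> 0 \<and> (\<forall>\<theta> \<theta>'. measure M (D i j \<theta> \<theta>') \<le> Cf i j * norm (\<theta> - \<theta>'))"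
    unfolding Cf_def by (rule someI_ex) (rule exC)
  have Pmeas: "(\<lambda>\<omega>. P (X0 \<omega>)) \<in> borel_measurable M" unfolding P_def using X0_meas by measurable
  have intP: "integrable M (\<lambda>\<omega>. P (X0 \<omega>))"
  proof (rule Bochner_Integration.integrable_bound[OF _ Pmeas])
    show "integrable M (\<lambda>\<omega>. 3 powr \<rho> * (1 + norm (X0 \<omega>) powr \<rho>))"
      using moment by auto
    show "AE \<omega> in M. norm (P (X0 \<omega>)) \<le> norm (3 powr \<rho> * (1 + norm (X0 \<omega>) powr \<rho>))"
    proof (rule AE_I2)
      fix \<omega>
      have a: "P (X0 \<omega>) \<le> 3 powr \<rho> * (1 + norm (X0 \<omega>) powr \<rho>)"
        unfolding P_def by (rule powr_bound[OF norm_ge_zero rho])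
      have "0 \<le> 3 powr \<rho> * (1 + norm (X0 \<omega>) powr \<rho>)" by simp
      then show "norm (P (X0 \<omega>)) \<le> norm (3 powr \<rho> * (1 + norm (X0 \<omega>) powr \<rho>))"
        using a P0[of "X0 \<omega>"] by simp
    qed
  qed
  define E where "E = (\<integral>\<omega>. P (X0 \<omega>) \<partial>M)"
  have E0: "0 \<le> E" unfolding E_def by (rule integral_nonneg_AE) (simp add: P0)
  define L where "L = E * (L1 + real N * L3) + K2 * (\<Sum>j\<in>{1..N}. \<Sum>i\<in>UNIV. Cf i j) + 1"
  have Cs: "0 \<le> (\<Sum>j\<in>{1..N}. \<Sum>i\<in>UNIV. Cf i j)"
    using Cf by (intro sum_nonneg) auto
  have L0: "L > 0" unfolding L_def using E0 L1 L3 K2 Cs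
    by (intro add_nonneg_pos add_nonneg_nonneg mult_nonneg_nonneg) auto
  have Gpt: "\<And>x \<theta> \<theta>'. norm (G \<theta> x - G \<theta>' x) \<le> (\<Sum>j\<in>{1..N}. P x * L3 * norm (\<theta> - \<theta>') +
       K2 * (\<Sum>i\<in>UNIV. if (x $ i \<in> I i j \<theta>) \<noteq> (x $ i \<in> I i j \<theta>') then 1 else 0))"
  proof -
    fix x :: "real^'m" and \<theta> \<theta>' :: "real^'d"
    have "G \<theta> x - G \<theta>' x = (\<Sum>j\<in>{1..N}. (if (\<forall>i. x $ i \<in> I i j \<theta>) then gdot j \<theta> x else 0)
            - (if (\<forall>i. x $ i \<in> I i j \<theta>') then gdot j \<theta>' x else 0))"
      by (simp add: G_def sum_subtractf)
    also have "norm \<dots> \<le> (\<Sum>j\<in>{1..N}. norm ((if (\<forall>i. x $ i \<in> I i j \<theta>) then gdot j \<theta> x else 0)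
            - (if (\<forall>i. x $ i \<in> I i j \<theta>') then gdot j \<theta>' x else 0)))"
      by (rule norm_sum)
    also have "\<dots> \<le> (\<Sum>j\<in>{1..N}. P x * L3 * norm (\<theta> - \<theta>') +
       K2 * (\<Sum>i\<in>UNIV. if (x $ i \<in> I i j \<theta>) \<noteq> (x $ i \<in> I i j \<theta>') then 1 else 0))"
    proof (rule sum_mono)
      fix j assume j: "j \<in> {1..N}"
      define S where "S = (\<Sum>i\<in>UNIV. if (x $ i \<in> I i j \<theta>) \<noteq> (x $ i \<in> I i j \<theta>') then 1 else (0::real))"
      have S0: "0 \<le> S" unfolding S_def by (intro sum_nonneg) auto
      have S1: "1 \<le> S" if ne: "(\<forall>i. x $ i \<in> I i j \<theta>) \<noteq> (\<forall>i. x $ i \<in> I i j \<theta>')"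
      proof -
        obtain i where i: "(x $ i \<in> I i j \<theta>) \<noteq> (x $ i \<in> I i j \<theta>')" using ne by blast
        have "(if (x $ i \<in> I i j \<theta>) \<noteq> (x $ i \<in> I i j \<theta>') then 1 else (0::real)) \<le> S"
          unfolding S_def by (rule member_le_sum) auto
        then show ?thesis using i by simp
      qed
      have "norm ((if (\<forall>i. x $ i \<in> I i j \<theta>) then gdot j \<theta> x else 0)
            - (if (\<forall>i. x $ i \<in> I i j \<theta>') then gdot j \<theta>' x else 0)) \<le> P x * L3 * norm (\<theta> - \<theta>') + K2 * S"
      proof (rule term_bound)
        show "norm (gdot j \<theta> x - gdot j \<theta>' x) \<le> P x * L3 * norm (\<theta> - \<theta>')"
          using g_lip[OF j, of \<theta> x \<theta>' x] by (simp add: P_def mult.assoc)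
      qed (use g_bdd[OF j] P0 L3 K2 S0 S1 in auto)
      then show "norm ((if (\<forall>i. x $ i \<in> I i j \<theta>) then gdot j \<theta> x else 0)
            - (if (\<forall>i. x $ i \<in> I i j \<theta>') then gdot j \<theta>' x else 0)) \<le> P x * L3 * norm (\<theta> - \<theta>') +
       K2 * (\<Sum>i\<in>UNIV. if (x $ i \<in> I i j \<theta>) \<noteq> (x $ i \<in> I i j \<theta>') then 1 else 0)"
        by (simp add: S_def)
    qed
    finally show "norm (G \<theta> x - G \<theta>' x) \<le> (\<Sum>j\<in>{1..N}. P x * L3 * norm (\<theta> - \<theta>') +
       K2 * (\<Sum>i\<in>UNIV. if (x $ i \<in> I i j \<theta>) \<noteq> (x $ i \<in> I i j \<theta>') then 1 else 0))" .
  qed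
  show ?thesis
  proof (rule exI[of _ L], intro conjI allI L0)
    fix \<theta> \<theta>' :: "real^'d"
    define R where "R = (\<lambda>\<omega>. P (X0 \<omega>) * ((L1 + real N * L3) * norm (\<theta> - \<theta>')) +
        K2 * (\<Sum>j\<in>{1..N}. \<Sum>i\<in>UNIV. indicator (D i j \<theta> \<theta>') \<omega>))"
    have ptw: "norm (H \<theta> (X0 \<omega>) - H \<theta>' (X0 \<omega>)) \<le> R \<omega>" if \<omega>: "\<omega> \<in> space M" for \<omega>
    proof -
      let ?x = "X0 \<omega>"
      have "H \<theta> ?x - H \<theta>' ?x = (F \<theta> ?x - F \<theta>' ?x) + (G \<theta> ?x - G \<theta>' ?x)" by (simp add: H_def)
      then have "norm (H \<theta> ?x - H \<theta>' ?x) \<le> norm (F \<theta> ?x - F \<theta>' ?x) + norm (G \<theta> ?x - G \<theta>' ?x)"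
        by (metis norm_triangle_ineq)
      also have "norm (F \<theta> ?x - F \<theta>' ?x) \<le> P ?x * (L1 * norm (\<theta> - \<theta>'))"
        using F_lip[of \<theta> ?x \<theta>' ?x] by (simp add: P_def)
      also have "norm (G \<theta> ?x - G \<theta>' ?x) \<le> (\<Sum>j\<in>{1..N}. P ?x * L3 * norm (\<theta> - \<theta>') +
       K2 * (\<Sum>i\<in>UNIV. if (?x $ i \<in> I i j \<theta>) \<noteq> (?x $ i \<in> I i j \<theta>') then 1 else 0))" by (rule Gpt)
      also have "(\<Sum>j\<in>{1..N}. P ?x * L3 * norm (\<theta> - \<theta>') +
       K2 * (\<Sum>i\<in>UNIV. if (?x $ i \<in> I i j \<theta>) \<noteq> (?x $ i \<in> I i j \<theta>') then 1 else 0))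
        = real N * (P ?x * L3 * norm (\<theta> - \<theta>')) + K2 * (\<Sum>j\<in>{1..N}. \<Sum>i\<in>UNIV. indicator (D i j \<theta> \<theta>') \<omega>)"
      proof -
        have ind: "\<And>i j. indicator (D i j \<theta> \<theta>') \<omega> = (if (?x $ i \<in> I i j \<theta>) \<noteq> (?x $ i \<in> I i j \<theta>') then 1 else (0::real))"
          by (simp add: D_def \<omega> indicator_def)
        show ?thesis
          unfolding sum.distrib sum_constant sum_distrib_left[symmetric] ind by simp
      qed
      finally show ?thesis by (simp add: R_def algebra_simps)
    qed
    have ii0: "\<And>j i. j \<in> {1..N} \<Longrightarrow> integrable M (indicator (D i j \<theta> \<theta>') :: _ \<Rightarrow> real)"
      using Dsets by (intro integrable_real_indicator) (auto simp: less_top[symmetric])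
    have intR: "integrable M R" unfolding R_def
    proof (rule Bochner_Integration.integrable_add)
      show "integrable M (\<lambda>\<omega>. P (X0 \<omega>) * ((L1 + real N * L3) * norm (\<theta> - \<theta>')))"
        using intP by (rule Bochner_Integration.integrable_mult_left)
      have "integrable M (\<lambda>\<omega>. \<Sum>j\<in>{1..N}. \<Sum>i\<in>UNIV. indicator (D i j \<theta> \<theta>') \<omega> :: real)"
        by (intro Bochner_Integration.integrable_sum ii0)
      then show "integrable M (\<lambda>\<omega>. K2 * (\<Sum>j\<in>{1..N}. \<Sum>i\<in>UNIV. indicator (D i j \<theta> \<theta>') \<omega>))"
        by (rule Bochner_Integration.integrable_mult_right)
    qed
    have R0: "\<And>\<omega>. 0 \<le> R \<omega>" unfolding R_def using P0 L1 L3 K2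
      by (intro add_nonneg_nonneg mult_nonneg_nonneg sum_nonneg) auto
    have "(\<integral>\<^sup>+ \<omega>. ennreal (norm (H \<theta> (X0 \<omega>) - H \<theta>' (X0 \<omega>))) \<partial>M) \<le> (\<integral>\<^sup>+ \<omega>. ennreal (R \<omega>) \<partial>M)"
      using ptw by (intro nn_integral_mono ennreal_leI) auto
    also have "\<dots> = ennreal (\<integral>\<omega>. R \<omega> \<partial>M)"
      using intR R0 by (intro nn_integral_eq_integral) auto
    also have "(\<integral>\<omega>. R \<omega> \<partial>M) = E * ((L1 + real N * L3) * norm (\<theta> - \<theta>')) +
        K2 * (\<Sum>j\<in>{1..N}. \<Sum>i\<in>UNIV. measure M (D i j \<theta> \<theta>'))"
    proof -
      have ii: "\<And>j i. j \<in> {1..N} \<Longrightarrow> integrable M (indicator (D i j \<theta> \<theta>') :: _ \<Rightarrow> real)"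
        by (rule ii0)
      have "(\<integral>\<omega>. R \<omega> \<partial>M) = (\<integral>\<omega>. P (X0 \<omega>) * ((L1 + real N * L3) * norm (\<theta> - \<theta>')) \<partial>M) +
        (\<integral>\<omega>. K2 * (\<Sum>j\<in>{1..N}. \<Sum>i\<in>UNIV. indicator (D i j \<theta> \<theta>') \<omega>) \<partial>M)"
        unfolding R_def using intP ii
        by (intro Bochner_Integration.integral_add Bochner_Integration.integrable_mult_left Bochner_Integration.integrable_mult_right Bochner_Integration.integrable_sum) auto
      also have "(\<integral>\<omega>. K2 * (\<Sum>j\<in>{1..N}. \<Sum>i\<in>UNIV. indicator (D i j \<theta> \<theta>') \<omega>) \<partial>M)
          = K2 * (\<Sum>j\<in>{1..N}. \<Sum>i\<in>UNIV. (\<integral>\<omega>. indicator (D i j \<theta> \<theta>') \<omega> \<partial>M))"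
        using ii by (simp add: integral_sum integrable_sum)
      also have "(\<Sum>j\<in>{1..N}. \<Sum>i\<in>UNIV. (\<integral>\<omega>. indicator (D i j \<theta> \<theta>') \<omega> \<partial>M)) =
          (\<Sum>j\<in>{1..N}. \<Sum>i\<in>UNIV. measure M (D i j \<theta> \<theta>'))"
        by (intro sum.cong refl) (simp add: D_def Int_absorb2 subset_iff)
      finally show ?thesis by (simp add: E_def)
    qed
    also have "E * ((L1 + real N * L3) * norm (\<theta> - \<theta>')) +
        K2 * (\<Sum>j\<in>{1..N}. \<Sum>i\<in>UNIV. measure M (D i j \<theta> \<theta>')) \<le> L * norm (\<theta> - \<theta>')"
    proof -
      have "(\<Sum>j\<in>{1..N}. \<Sum>i\<in>UNIV. measure M (D i j \<theta> \<theta>')) \<le> (\<Sum>j\<in>{1..N}. \<Sum>i\<in>UNIV. Cf i j * norm (\<theta> - \<theta>'))"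
        using Cf by (intro sum_mono) auto
      also have "\<dots> = (\<Sum>j\<in>{1..N}. \<Sum>i\<in>UNIV. Cf i j) * norm (\<theta> - \<theta>')"
        by (simp add: sum_distrib_right)
      finally have "K2 * (\<Sum>j\<in>{1..N}. \<Sum>i\<in>UNIV. measure M (D i j \<theta> \<theta>')) \<le> K2 * ((\<Sum>j\<in>{1..N}. \<Sum>i\<in>UNIV. Cf i j) * norm (\<theta> - \<theta>'))"
        using K2 by (intro mult_left_mono) auto
      then show ?thesis unfolding L_def
        by (simp add: algebra_simps) (smt (verit) norm_ge_zero)
    qed
    finally show "(\<integral>\<^sup>+ \<omega>. ennreal (norm (H \<theta> (X0 \<omega>) - H \<theta>' (X0 \<omega>))) \<partial>M) \<le> ennreal (L * norm (\<theta> - \<theta>'))"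
      by (simp add: ennreal_leI)
  qed
qed

end
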